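(* Fix an integer $\ell\ge2$ and a real $p\in(0,1)$, and let $X$ be the number of derangements of $G_{k,\ell}(m)$. Then $\mathbb{E}[X^2]\sim\mathbb{E}[X]^2$ as $k\to\infty$.
   Context: For integers $k\ge1$, $\ell\ge2$, $D_{k,\ell}$ is the digraph with vertex set $\{v_{i,j}: i\in[k], j\in[\ell]\}$ in which $(v_{i,j},v_{i',j'})$ is an arc if and only if $j'\equiv j+1 \pmod \ell$; it has $k^2\ell$ arcs. Given $p\in(0,1)$, let $m=\lfloor pk^2\ell\rfloor$ and let $G_{k,\ell}(m)$ be a spanning subgraph of $D_{k,\ell}$ chosen uniformly at random among those with exactly $m$ arcs. A permutation in a digraph $G=(V,E)$ is a bijection $f:V\to V$ such that for every $v$ either $f(v)=v$ or $(v,f(v))\in E$; a derangement is a permutation fixing no vertex. Asymptotics are as $k\to\infty$ with $\ell,p$ fixed; $A\sim B$ means $A/B\to1$. *)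

theory Defs
  imports "HOL-Probability.Probability" "HOL-Library.Landau_Symbols"
begin

text \<open>Vertex v_{i,j} is encoded as the pair (i,j) with i < k, j < l (0-based indices).\<close>
definition Dverts :: "nat \<Rightarrow> nat \<Rightarrow> (nat \<times> nat) set" where
  "Dverts k l = {..<k} \<times> {..<l}"

definition Darcs :: "nat \<Rightarrow> nat \<Rightarrow> ((nat \<times> nat) \<times> (nat \<times> nat)) set" where
  "Darcs k l = {(u, v). u \<in> Dverts k l \<and> v \<in> Dverts k l \<and> snd v = (snd u + 1) mod l}"

text \<open>Permutations of a digraph (V,E): bijections f : V \<rightarrow> V with f v = v or (v, f v) \<in> E.
  Functions are taken extensionally (identity outside V) so that the set is finite.\<close>
definition digraph_perms :: "'a set \<Rightarrow> ('a \<times> 'a) set \<Rightarrow> ('a \<Rightarrow> 'a) set" where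
  "digraph_perms V E = {f. bij_betw f V V \<and> (\<forall>v\<in>V. f v = v \<or> (v, f v) \<in> E) \<and> (\<forall>v. v \<notin> V \<longrightarrow> f v = v)}"

definition digraph_derangements :: "'a set \<Rightarrow> ('a \<times> 'a) set \<Rightarrow> ('a \<Rightarrow> 'a) set" where
  "digraph_derangements V E = {f \<in> digraph_perms V E. \<forall>v\<in>V. f v \<noteq> v}"

definition Dsubgraphs :: "nat \<Rightarrow> nat \<Rightarrow> nat \<Rightarrow> ((nat \<times> nat) \<times> (nat \<times> nat)) set set" where
  "Dsubgraphs k l m = {E. E \<subseteq> Darcs k l \<and> card E = m}"

definition m_of :: "real \<Rightarrow> nat \<Rightarrow> nat \<Rightarrow> nat" where
  "m_of p k l = nat \<lfloor>p * real (k^2 * l)\<rfloor>"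

definition G_rand :: "nat \<Rightarrow> nat \<Rightarrow> nat \<Rightarrow> ((nat \<times> nat) \<times> (nat \<times> nat)) set pmf" where
  "G_rand k l m = pmf_of_set (Dsubgraphs k l m)"

definition num_der :: "nat \<Rightarrow> nat \<Rightarrow> ((nat \<times> nat) \<times> (nat \<times> nat)) set \<Rightarrow> real" where
  "num_der k l E = real (card (digraph_derangements (Dverts k l) E))"

end

theory Submission
  imports Defs "HOL-Combinatorics.Permutations" "HOL-Real_Asymp.Real_Asymp"
begin


lemma sum_pow_card:
  fixes F :: "nat \<Rightarrow> real"
  assumes "finite S"
  shows "(\<Sum>T\<in>Pow S. F (card T)) = (\<Sum>t\<le>card S. real (card S choose t) * F t)"
proof -
  have "(\<Sum>T\<in>Pow S. F (card T)) = (\<Sum>t\<le>card S. \<Sum>T\<in>{T. T \<in> Pow S \<and> card T = t}. F (card T))"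
    using assms by (intro sum.group[symmetric]) (auto intro: card_mono)
  also have "\<dots> = (\<Sum>t\<le>card S. real (card S choose t) * F t)"
  proof (intro sum.cong refl)
    fix t
    have "(\<Sum>T\<in>{T. T \<in> Pow S \<and> card T = t}. F (card T)) = (\<Sum>T\<in>{T. T \<subseteq> S \<and> card T = t}. F t)"
      by (intro sum.cong) auto
    also have "\<dots> = real (card S choose t) * F t"
      using n_subsets[OF assms, of t] by simp
    finally show "(\<Sum>T\<in>{T. T \<in> Pow S \<and> card T = t}. F (card T)) = real (card S choose t) * F t" .
  qed
  finally show ?thesis .
qed

lemma pow_expand:
  fixes y :: real
  assumes "finite S"
  shows "(1 + y) ^ card S = (\<Sum>T\<in>Pow S. y ^ card T)"
  using sum_pow_card[OF assms, of "\<lambda>t. y ^ t"] binomial_ring[of y 1 "card S"]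
  by (simp add: add.commute)

lemma partial_exp_le:
  fixes y :: real
  assumes "y \<ge> 0"
  shows "(\<Sum>t\<le>n. y ^ t / fact t) \<le> exp y"
proof -
  have s: "(\<lambda>t. y ^ t / fact t) sums exp y"
    using exp_converges[of y] by (simp add: scaleR_conv_of_real divide_inverse mult.commute)
  show ?thesis
    using sum_le_suminf[OF sums_summable[OF s], of "{..n}"] sums_unique[OF s] assms
    by auto
qed

lemma permutes_fix_subset:
  assumes "r permutes K" "\<forall>t\<in>T. r t = t"
  shows "r permutes (K - T)"
  using assms by (intro permutes_superset[OF assms(1)]) auto

lemma card_agree_le:
  assumes "finite K" "p permutes K" "T \<subseteq> K"
  shows "card {q. q permutes K \<and> (\<forall>t\<in>T. q t = p t)} \<le> fact (card K - card T)"
proof -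
  have fin: "finite {r. r permutes (K - T)}"
    using assms by (simp add: finite_permutations)
  have "inj_on (\<lambda>q. inv p \<circ> q) {q. q permutes K \<and> (\<forall>t\<in>T. q t = p t)}"
  proof (rule inj_onI)
    fix q1 q2 assume "inv p \<circ> q1 = inv p \<circ> q2"
    hence "p \<circ> (inv p \<circ> q1) = p \<circ> (inv p \<circ> q2)" by simp
    thus "q1 = q2" using permutes_inv_o(1)[OF assms(2)] by (simp add: o_assoc)
  qed
  moreover have "(\<lambda>q. inv p \<circ> q) ` {q. q permutes K \<and> (\<forall>t\<in>T. q t = p t)} \<subseteq> {r. r permutes (K - T)}"
  proof
    fix r assume "r \<in> (\<lambda>q. inv p \<circ> q) ` {q. q permutes K \<and> (\<forall>t\<in>T. q t = p t)}"
    then obtain q where q: "q permutes K" "\<forall>t\<in>T. q t = p t" and r: "r = inv p \<circ> q" by auto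
    have "r permutes K" unfolding r by (intro permutes_compose q(1) permutes_inv assms(2))
    moreover have "\<forall>t\<in>T. r t = t" using q(2) permutes_inverses(2)[OF assms(2)] by (simp add: r)
    ultimately show "r \<in> {r. r permutes (K - T)}" using permutes_fix_subset by blast
  qed
  ultimately have "card {q. q permutes K \<and> (\<forall>t\<in>T. q t = p t)} \<le> card {r. r permutes (K - T)}"
    using card_inj_on_le fin by blast
  also have "\<dots> = fact (card K - card T)"
    using assms by (intro card_permutations) (auto simp: card_Diff_subset finite_subset)
  finally show ?thesis .
qed

lemma layer_bound:
  fixes y :: real
  assumes fin: "finite K" and y: "y \<ge> 0"
  shows "(\<Sum>p\<in>{p. p permutes K}. \<Sum>q\<in>{p. p permutes K}. (1 + y) ^ card {i\<in>K. p i = q i})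
         \<le> (fact (card K))\<^sup>2 * exp y"
proof -
  define P where "P = {p. p permutes K}"
  have finP: "finite P" unfolding P_def using fin by (simp add: finite_permutations)
  have cardP: "card P = fact (card K)" unfolding P_def using fin card_permutations by blast
  have e1: "(1 + y) ^ card {i\<in>K. p i = q i} = (\<Sum>T\<in>Pow K. if T \<subseteq> {i\<in>K. p i = q i} then y ^ card T else 0)" for p q :: "'a \<Rightarrow> 'a"
  proof -
    have "(1 + y) ^ card {i\<in>K. p i = q i} = (\<Sum>T\<in>Pow {i\<in>K. p i = q i}. y ^ card T)"
      using fin by (intro pow_expand) auto
    also have "Pow {i\<in>K. p i = q i} = {T\<in>Pow K. T \<subseteq> {i\<in>K. p i = q i}}" by auto
    also have "(\<Sum>T\<in>\<dots>. y ^ card T) = (\<Sum>T\<in>Pow K. if T \<subseteq> {i\<in>K. p i = q i} then y ^ card T else 0)"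
      using sum.inter_filter[of "Pow K" "\<lambda>T. y ^ card T" "\<lambda>T. T \<subseteq> {i\<in>K. p i = q i}"] fin by simp
    finally show ?thesis .
  qed
  have aux: "(\<Sum>q\<in>P. if Q q then c else 0) = real (card {q\<in>P. Q q}) * c" for Q and c :: real
    using sum.inter_filter[OF finP, of "\<lambda>_. c" Q] by simp
  have "(\<Sum>p\<in>P. \<Sum>q\<in>P. (1 + y) ^ card {i\<in>K. p i = q i})
      = (\<Sum>p\<in>P. \<Sum>q\<in>P. \<Sum>T\<in>Pow K. if T \<subseteq> {i\<in>K. p i = q i} then y ^ card T else 0)"
    by (intro sum.cong refl e1)
  also have "\<dots> = (\<Sum>p\<in>P. \<Sum>T\<in>Pow K. \<Sum>q\<in>P. if T \<subseteq> {i\<in>K. p i = q i} then y ^ card T else 0)"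
    by (intro sum.cong refl sum.swap)
  also have "\<dots> = (\<Sum>T\<in>Pow K. \<Sum>p\<in>P. \<Sum>q\<in>P. if T \<subseteq> {i\<in>K. p i = q i} then y ^ card T else 0)"
    by (rule sum.swap)
  also have "\<dots> \<le> (\<Sum>T\<in>Pow K. y ^ card T * (fact (card K) * fact (card K - card T)))"
  proof (intro sum_mono)
    fix T assume T: "T \<in> Pow K"
    have "(\<Sum>p\<in>P. \<Sum>q\<in>P. if T \<subseteq> {i\<in>K. p i = q i} then y ^ card T else 0)
        = (\<Sum>p\<in>P. real (card {q\<in>P. T \<subseteq> {i\<in>K. p i = q i}}) * y ^ card T)"
      by (intro sum.cong refl aux)
    also have "\<dots> \<le> (\<Sum>p\<in>P. fact (card K - card T) * y ^ card T)"
    proof (intro sum_mono mult_right_mono)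
      fix p assume p: "p \<in> P"
      have "{q\<in>P. T \<subseteq> {i\<in>K. p i = q i}} = {q. q permutes K \<and> (\<forall>t\<in>T. q t = p t)}"
      proof -
        have TK: "T \<subseteq> K" using T by simp
        have "T \<subseteq> {i\<in>K. p i = q i} \<longleftrightarrow> (\<forall>t\<in>T. q t = p t)" for q
          using TK by auto
        thus ?thesis unfolding P_def by simp
      qed
      hence "card {q\<in>P. T \<subseteq> {i\<in>K. p i = q i}} \<le> fact (card K - card T)"
        using card_agree_le[OF fin _ , of p T] p T unfolding P_def by auto
      hence "real (card {q\<in>P. T \<subseteq> {i\<in>K. p i = q i}}) \<le> real (fact (card K - card T))"
        by (rule of_nat_mono)
      thus "real (card {q\<in>P. T \<subseteq> {i\<in>K. p i = q i}}) \<le> fact (card K - card T)"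
        by simp
    qed (use y in auto)
    also have "\<dots> = y ^ card T * (fact (card K) * fact (card K - card T))"
      using cardP by simp
    finally show "(\<Sum>p\<in>P. \<Sum>q\<in>P. if T \<subseteq> {i\<in>K. p i = q i} then y ^ card T else 0)
        \<le> y ^ card T * (fact (card K) * fact (card K - card T))" .
  qed
  also have "\<dots> = (\<Sum>t\<le>card K. real (card K choose t) * (y ^ t * (fact (card K) * fact (card K - t))))"
    using sum_pow_card[OF fin, of "\<lambda>t. y ^ t * (fact (card K) * fact (card K - t))"] by (simp only:)
  also have "\<dots> = (\<Sum>t\<le>card K. (fact (card K))\<^sup>2 * (y ^ t / fact t))"
  proof (intro sum.cong refl)
    fix t assume "t \<in> {..card K}"
    hence "t \<le> card K" by simp
    hence h: "fact t * fact (card K - t) * (card K choose t) = (fact (card K) :: nat)"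
      by (rule binomial_fact_lemma)
    have "real (card K choose t) * fact t * fact (card K - t) = fact (card K)"
      using arg_cong[OF h, of real] by (simp add: algebra_simps)
    thus "real (card K choose t) * (y ^ t * (fact (card K) * fact (card K - t))) = (fact (card K))\<^sup>2 * (y ^ t / fact t)"
      by (simp add: field_simps power2_eq_square)
  qed
  also have "\<dots> = (fact (card K))\<^sup>2 * (\<Sum>t\<le>card K. y ^ t / fact t)"
    by (rule sum_distrib_left[symmetric])
  also have "\<dots> \<le> (fact (card K))\<^sup>2 * exp y"
    by (rule mult_left_mono[OF partial_exp_le[OF y]]) simp
  finally show ?thesis unfolding P_def .
qed



abbreviation "Der k l \<equiv> digraph_derangements (Dverts k l) (Darcs k l)"

definition Phi :: "nat \<Rightarrow> nat \<Rightarrow> (nat \<times> nat \<Rightarrow> nat \<times> nat) \<Rightarrow> nat \<Rightarrow> nat \<Rightarrow> nat" where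
  "Phi k l f = restrict (\<lambda>j i. if i < k then fst (f (i, j)) else i) {..<l}"

definition Psi :: "nat \<Rightarrow> nat \<Rightarrow> (nat \<Rightarrow> nat \<Rightarrow> nat) \<Rightarrow> (nat \<times> nat \<Rightarrow> nat \<times> nat)" where
  "Psi k l F = (\<lambda>v. if v \<in> Dverts k l then (F (snd v) (fst v), (snd v + 1) mod l) else v)"

lemma Der_iff:
  "f \<in> Der k l \<longleftrightarrow> bij_betw f (Dverts k l) (Dverts k l) \<and> (\<forall>v\<in>Dverts k l. (v, f v) \<in> Darcs k l \<and> f v \<noteq> v)
     \<and> (\<forall>v. v \<notin> Dverts k l \<longrightarrow> f v = v)"
  unfolding digraph_derangements_def digraph_perms_def mem_Collect_eq by blast

lemma Phi_val: "j < l \<Longrightarrow> i < k \<Longrightarrow> Phi k l f j i = fst (f (i, j))"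
  unfolding Phi_def by simp

lemma Psi_val:
  assumes "i < k" "j < l"
  shows "Psi k l F (i, j) = (F j i, (j + 1) mod l)"
proof -
  have "(i, j) \<in> Dverts k l" using assms unfolding Dverts_def by simp
  thus ?thesis unfolding Psi_def by (simp only: if_True fst_conv snd_conv)
qed

lemma Der_sub_iff:
  assumes "E \<subseteq> Darcs k l"
  shows "f \<in> digraph_derangements (Dverts k l) E \<longleftrightarrow> f \<in> Der k l \<and> (\<forall>v\<in>Dverts k l. (v, f v) \<in> E)"
  using assms unfolding digraph_derangements_def digraph_perms_def by auto

lemma Der_props:
  assumes "f \<in> Der k l" "v \<in> Dverts k l"
  shows "f v \<in> Dverts k l" "snd (f v) = (snd v + 1) mod l" "f v \<noteq> v"
proof -
  have b: "bij_betw f (Dverts k l) (Dverts k l)" and a: "(v, f v) \<in> Darcs k l" "f v \<noteq> v"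
    using assms(1)[unfolded Der_iff] assms(2) by auto
  show "f v \<in> Dverts k l" "snd (f v) = (snd v + 1) mod l" "f v \<noteq> v"
    using a assms(2) unfolding Darcs_def by auto
qed

lemma Der_out: "f \<in> Der k l \<Longrightarrow> v \<notin> Dverts k l \<Longrightarrow> f v = v"
  unfolding Der_iff by blast

lemma finite_Dverts: "finite (Dverts k l)" unfolding Dverts_def by simp

lemma mod_suc_inj:
  fixes j j' l :: nat
  assumes "j < l" "j' < l" "(j + 1) mod l = (j' + 1) mod l"
  shows "j = j'"
proof -
  have a: "(j + 1) mod l = (if j + 1 = l then 0 else j + 1)" using assms(1) by auto
  have b: "(j' + 1) mod l = (if j' + 1 = l then 0 else j' + 1)" using assms(2) by auto
  show ?thesis using assms(3) unfolding a b by (auto split: if_splits)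
qed

lemma Phi_permutes:
  assumes f: "f \<in> Der k l" and j: "j < l"
  shows "Phi k l f j permutes {..<k}"
proof -
  let ?g = "\<lambda>i. if i < k then fst (f (i, j)) else i"
  have g: "Phi k l f j = ?g" unfolding Phi_def using j by simp
  have inj: "inj_on ?g {..<k}"
  proof (rule inj_onI)
    fix a b assume ab: "a \<in> {..<k}" "b \<in> {..<k}" "?g a = ?g b"
    have va: "(a, j) \<in> Dverts k l" and vb: "(b, j) \<in> Dverts k l" using ab j by (auto simp: Dverts_def)
    have "f (a, j) = f (b, j)"
      using ab Der_props(2)[OF f va] Der_props(2)[OF f vb] by (simp add: prod_eq_iff)
    hence "(a, j) = (b, j)" using f va vb unfolding Der_iff bij_betw_def inj_on_def by blast
    thus "a = b" by simp
  qed
  have sub: "?g ` {..<k} \<subseteq> {..<k}"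
  proof
    fix x assume "x \<in> ?g ` {..<k}"
    then obtain a where a: "a < k" "x = ?g a" by auto
    have "(a, j) \<in> Dverts k l" using a j by (auto simp: Dverts_def)
    hence "f (a, j) \<in> Dverts k l" by (rule Der_props(1)[OF f])
    thus "x \<in> {..<k}" using a by (auto simp: Dverts_def)
  qed
  have "?g ` {..<k} = {..<k}" using endo_inj_surj[OF _ sub inj] by simp
  hence "bij_betw ?g {..<k} {..<k}" using inj by (simp add: bij_betw_def)
  moreover have "?g x = x" if "x \<notin> {..<k}" for x using that by simp
  ultimately have "?g permutes {..<k}" by (rule bij_imp_permutes)
  thus ?thesis using g by simp
qed

lemma Phi_inj: "inj_on (Phi k l) (Der k l)"
proof (rule inj_onI)
  fix f g assume f: "f \<in> Der k l" and g: "g \<in> Der k l" and eq: "Phi k l f = Phi k l g"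
  show "f = g"
  proof
    fix v
    show "f v = g v"
    proof (cases "v \<in> Dverts k l")
      case True
      obtain i j where v: "v = (i, j)" "i < k" "j < l" using True by (auto simp: Dverts_def)
      have "Phi k l f j i = Phi k l g j i" by (simp only: eq)
      hence "fst (f v) = fst (g v)" using v Phi_val[of j l i k] by simp
      moreover have "snd (f v) = snd (g v)" using Der_props(2)[OF f True] Der_props(2)[OF g True] by simp
      ultimately show ?thesis by (simp add: prod_eq_iff)
    next
      case False
      thus ?thesis using Der_out[OF f] Der_out[OF g] by simp
    qed
  qed
qed

lemma Phi_in: "f \<in> Der k l \<Longrightarrow> Phi k l f \<in> PiE {..<l} (\<lambda>_. {p. p permutes {..<k}})"
  using Phi_permutes by (auto simp: Phi_def)

lemma Psi_Der:
  assumes l: "l \<ge> 2" and F: "F \<in> PiE {..<l} (\<lambda>_. {p. p permutes {..<k}})"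
  shows "Psi k l F \<in> Der k l" "Phi k l (Psi k l F) = F"
proof -
  have Fp: "F j permutes {..<k}" if "j < l" for j using F that by auto
  let ?h = "Psi k l F"
  have hv: "?h (i, j) = (F j i, (j + 1) mod l)" if "i < k" "j < l" for i j
    using that by (rule Psi_val)
  have inj: "inj_on ?h (Dverts k l)"
  proof (rule inj_onI)
    fix u w assume u: "u \<in> Dverts k l" and w: "w \<in> Dverts k l" and e: "?h u = ?h w"
    obtain i j where ui: "u = (i, j)" "i < k" "j < l" using u by (auto simp: Dverts_def)
    obtain i' j' where wi: "w = (i', j')" "i' < k" "j' < l" using w by (auto simp: Dverts_def)
    have "(j + 1) mod l = (j' + 1) mod l" using e ui wi hv by simp
    hence jj: "j = j'" using mod_suc_inj ui wi by blast
    have "F j i = F j i'" using e ui wi hv jj by simp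
    hence "i = i'" using permutes_inj[OF Fp[OF ui(3)]] unfolding inj_def by blast
    thus "u = w" using ui wi jj by simp
  qed
  have sub: "?h ` Dverts k l \<subseteq> Dverts k l"
  proof
    fix x assume "x \<in> ?h ` Dverts k l"
    then obtain i j where ij: "i < k" "j < l" "x = ?h (i, j)" by (auto simp: Dverts_def)
    have "F j i \<in> {..<k}" using permutes_in_image[OF Fp[OF ij(2)]] ij by simp
    moreover have "(j + 1) mod l < l" using l by simp
    ultimately show "x \<in> Dverts k l" using ij hv by (simp add: Dverts_def)
  qed
  have bij: "bij_betw ?h (Dverts k l) (Dverts k l)"
    using endo_inj_surj[OF finite_Dverts sub inj] inj by (simp add: bij_betw_def)
  have arcs: "(v, ?h v) \<in> Darcs k l \<and> ?h v \<noteq> v" if v: "v \<in> Dverts k l" for v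
  proof -
    obtain i j where ij: "v = (i, j)" "i < k" "j < l" using v by (auto simp: Dverts_def)
    have "?h v \<in> Dverts k l" using sub v by auto
    moreover have "(j + 1) mod l \<noteq> j"
    proof
      assume "(j + 1) mod l = j"
      thus False using ij(3) l by (cases "j + 1 = l") auto
    qed
    ultimately show ?thesis using v ij hv by (auto simp: Darcs_def)
  qed
  have out: "\<forall>v. v \<notin> Dverts k l \<longrightarrow> ?h v = v" by (simp add: Psi_def)
  show "?h \<in> Der k l" unfolding Der_iff using bij arcs out by blast
  show "Phi k l ?h = F"
  proof
    fix j
    show "Phi k l ?h j = F j"
    proof (cases "j < l")
      case True
      show ?thesis
      proof
        fix i show "Phi k l ?h j i = F j i"
          using True hv permutes_not_in[OF Fp[OF True], of i] by (simp add: Phi_def)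
      qed
    next
      case False
      thus ?thesis using F by (simp add: Phi_def PiE_def extensional_def)
    qed
  qed
qed

lemma Phi_bij:
  assumes "l \<ge> 2"
  shows "bij_betw (Phi k l) (Der k l) (PiE {..<l} (\<lambda>_. {p. p permutes {..<k}}))"
  unfolding bij_betw_def
proof
  show "inj_on (Phi k l) (Der k l)" by (rule Phi_inj)
  show "Phi k l ` Der k l = PiE {..<l} (\<lambda>_. {p. p permutes {..<k}})"
  proof
    show "Phi k l ` Der k l \<subseteq> PiE {..<l} (\<lambda>_. {p. p permutes {..<k}})" using Phi_in by blast
    show "PiE {..<l} (\<lambda>_. {p. p permutes {..<k}}) \<subseteq> Phi k l ` Der k l"
    proof
      fix F assume F: "F \<in> PiE {..<l} (\<lambda>_. {p. p permutes {..<k}})"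
      show "F \<in> Phi k l ` Der k l"
        by (rule image_eqI[of _ _ "Psi k l F"]) (use Psi_Der[OF assms F] in auto)
    qed
  qed
qed

lemma card_Der:
  assumes "l \<ge> 2"
  shows "card (Der k l) = fact k ^ l"
proof -
  have "card (Der k l) = card (PiE {..<l} (\<lambda>_. {p. p permutes {..<k}}))"
    using bij_betw_same_card[OF Phi_bij[OF assms]] .
  also have "\<dots> = fact k ^ l"
    using card_PiE[of "{..<l}" "\<lambda>_. {p. p permutes {..<k}}"] card_permutations[of "{..<k}" k] by simp
  finally show ?thesis .
qed

lemma finite_Der:
  assumes "l \<ge> 2"
  shows "finite (Der k l)"
proof (rule ccontr)
  assume "infinite (Der k l)"
  hence "card (Der k l) = 0" by simp
  thus False using card_Der[OF assms, of k] by simp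
qed



lemma agree_card_split:
  assumes f: "f \<in> Der k l" and g: "g \<in> Der k l"
  shows "card {v\<in>Dverts k l. f v = g v} = (\<Sum>j<l. card {i\<in>{..<k}. Phi k l f j i = Phi k l g j i})"
proof -
  define A where "A j = {i\<in>{..<k}. Phi k l f j i = Phi k l g j i}" for j
  have eq: "{v\<in>Dverts k l. f v = g v} = (\<Union>j<l. (\<lambda>i. (i, j)) ` A j)"
  proof (intro set_eqI iffI)
    fix v assume v: "v \<in> {v\<in>Dverts k l. f v = g v}"
    then obtain i j where ij: "v = (i, j)" "i < k" "j < l" by (auto simp: Dverts_def)
    have "Phi k l f j i = Phi k l g j i" using v ij Phi_val[of j l i k] by simp
    thus "v \<in> (\<Union>j<l. (\<lambda>i. (i, j)) ` A j)" using ij unfolding A_def by blast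
  next
    fix v assume "v \<in> (\<Union>j<l. (\<lambda>i. (i, j)) ` A j)"
    then obtain i j where ij: "v = (i, j)" "i < k" "j < l" "Phi k l f j i = Phi k l g j i"
      unfolding A_def by blast
    have vV: "v \<in> Dverts k l" using ij by (simp add: Dverts_def)
    have "fst (f v) = fst (g v)" using ij Phi_val[of j l i k] by simp
    moreover have "snd (f v) = snd (g v)" using Der_props(2)[OF f vV] Der_props(2)[OF g vV] by simp
    ultimately show "v \<in> {v\<in>Dverts k l. f v = g v}" using vV by (simp add: prod_eq_iff)
  qed
  have "card (\<Union>j<l. (\<lambda>i. (i, j)) ` A j) = (\<Sum>j<l. card ((\<lambda>i. (i, j)) ` A j))"
    by (intro card_UN_disjoint) (auto simp: A_def)
  also have "\<dots> = (\<Sum>j<l. card (A j))"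
    by (intro sum.cong refl card_image) (auto simp: inj_on_def)
  finally show ?thesis unfolding eq A_def .
qed

lemma key_bound:
  fixes x :: real
  assumes l: "l \<ge> 2" and x: "x \<ge> 1"
  shows "(\<Sum>f\<in>Der k l. \<Sum>g\<in>Der k l. x ^ card {v\<in>Dverts k l. f v = g v})
         \<le> (real (card (Der k l)))\<^sup>2 * exp (real l * (x - 1))"
proof -
  define P where "P = {p. p permutes {..<k::nat}}"
  define h where "h p q = x ^ card {i\<in>{..<k}. p i = q i}" for p q :: "nat \<Rightarrow> nat"
  have finP: "finite P" unfolding P_def by (simp add: finite_permutations)
  have bij: "bij_betw (Phi k l) (Der k l) (PiE {..<l} (\<lambda>_. P))"
    unfolding P_def by (rule Phi_bij[OF l])
  have step1: "x ^ card {v\<in>Dverts k l. f v = g v} = (\<Prod>j<l. h (Phi k l f j) (Phi k l g j))"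
    if "f \<in> Der k l" "g \<in> Der k l" for f g
    unfolding agree_card_split[OF that] power_sum h_def ..
  have "(\<Sum>f\<in>Der k l. \<Sum>g\<in>Der k l. x ^ card {v\<in>Dverts k l. f v = g v})
      = (\<Sum>f\<in>Der k l. \<Sum>g\<in>Der k l. \<Prod>j<l. h (Phi k l f j) (Phi k l g j))"
    by (intro sum.cong refl step1)
  also have "\<dots> = (\<Sum>f\<in>Der k l. \<Sum>G\<in>PiE {..<l} (\<lambda>_. P). \<Prod>j<l. h (Phi k l f j) (G j))"
    by (intro sum.cong refl sum.reindex_bij_betw bij)
  also have "\<dots> = (\<Sum>F\<in>PiE {..<l} (\<lambda>_. P). \<Sum>G\<in>PiE {..<l} (\<lambda>_. P). \<Prod>j<l. h (F j) (G j))"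
    by (rule sum.reindex_bij_betw[OF bij, of "\<lambda>F. \<Sum>G\<in>PiE {..<l} (\<lambda>_. P). \<Prod>j<l. h (F j) (G j)"])
  also have "\<dots> = (\<Sum>F\<in>PiE {..<l} (\<lambda>_. P). \<Prod>j<l. \<Sum>q\<in>P. h (F j) q)"
    by (intro sum.cong refl prod_sum_PiE[symmetric]) (auto simp: finP)
  also have "\<dots> = (\<Prod>j<l. \<Sum>p\<in>P. \<Sum>q\<in>P. h p q)"
    by (rule prod_sum_PiE[symmetric, of "{..<l}" "\<lambda>_. P" "\<lambda>j p. \<Sum>q\<in>P. h p q"]) (auto simp: finP)
  also have "\<dots> \<le> (\<Prod>j<l. (fact k)\<^sup>2 * exp (x - 1))"
  proof (intro prod_mono conjI)
    fix j
    show "0 \<le> (\<Sum>p\<in>P. \<Sum>q\<in>P. h p q)" unfolding h_def using x by (intro sum_nonneg) simp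
    have "(\<Sum>p\<in>P. \<Sum>q\<in>P. (1 + (x - 1)) ^ card {i\<in>{..<k}. p i = q i}) \<le> (fact (card {..<k}))\<^sup>2 * exp (x - 1)"
      unfolding P_def by (rule layer_bound) (use x in auto)
    thus "(\<Sum>p\<in>P. \<Sum>q\<in>P. h p q) \<le> (fact k)\<^sup>2 * exp (x - 1)" unfolding h_def by simp
  qed
  also have "\<dots> = ((fact k)\<^sup>2 * exp (x - 1)) ^ l" by simp
  also have "\<dots> = (real (card (Der k l)))\<^sup>2 * exp (real l * (x - 1))"
    unfolding card_Der[OF l] exp_of_nat_mult power_mult_distrib
    by (simp add: power_mult[symmetric] mult.commute)
  finally show ?thesis .
qed



lemma count_supersets:
  assumes U: "finite U" and S: "S \<subseteq> U" and m: "card S \<le> m"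
  shows "card {E. E \<subseteq> U \<and> card E = m \<and> S \<subseteq> E} = (card U - card S) choose (m - card S)"
proof -
  have fS: "finite S" using U S finite_subset by blast
  have bij: "bij_betw (\<lambda>E. E - S) {E. E \<subseteq> U \<and> card E = m \<and> S \<subseteq> E} {B. B \<subseteq> U - S \<and> card B = m - card S}"
  proof (rule bij_betw_byWitness[where f' = "\<lambda>B. B \<union> S"])
    show "\<forall>E\<in>{E. E \<subseteq> U \<and> card E = m \<and> S \<subseteq> E}. E - S \<union> S = E" by auto
    show "\<forall>B\<in>{B. B \<subseteq> U - S \<and> card B = m - card S}. B \<union> S - S = B" by auto
    show "(\<lambda>E. E - S) ` {E. E \<subseteq> U \<and> card E = m \<and> S \<subseteq> E} \<subseteq> {B. B \<subseteq> U - S \<and> card B = m - card S}"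
    proof
      fix B assume "B \<in> (\<lambda>E. E - S) ` {E. E \<subseteq> U \<and> card E = m \<and> S \<subseteq> E}"
      then obtain E where E: "E \<subseteq> U" "card E = m" "S \<subseteq> E" "B = E - S" by auto
      have "finite E" using E U finite_subset by blast
      thus "B \<in> {B. B \<subseteq> U - S \<and> card B = m - card S}" using E card_Diff_subset[OF fS E(3)] by auto
    qed
    show "(\<lambda>B. B \<union> S) ` {B. B \<subseteq> U - S \<and> card B = m - card S} \<subseteq> {E. E \<subseteq> U \<and> card E = m \<and> S \<subseteq> E}"
    proof
      fix E assume "E \<in> (\<lambda>B. B \<union> S) ` {B. B \<subseteq> U - S \<and> card B = m - card S}"
      then obtain B where B: "B \<subseteq> U - S" "card B = m - card S" "E = B \<union> S" by auto
      have "finite B" using B U finite_subset by blast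
      hence "card E = card B + card S" unfolding B(3) using B fS by (intro card_Un_disjoint) auto
      thus "E \<in> {E. E \<subseteq> U \<and> card E = m \<and> S \<subseteq> E}" using B S m by auto
    qed
  qed
  have "card {E. E \<subseteq> U \<and> card E = m \<and> S \<subseteq> E} = card {B. B \<subseteq> U - S \<and> card B = m - card S}"
    using bij_betw_same_card[OF bij] .
  also have "\<dots> = card (U - S) choose (m - card S)" using U by (intro n_subsets) auto
  also have "card (U - S) = card U - card S" using card_Diff_subset[OF fS S] .
  finally show ?thesis .
qed

lemma binom_ratio:
  assumes "t \<le> r" "r \<le> n"
  shows "real (n choose r) = real ((n - t) choose (r - t)) * (\<Prod>i<t. real (n - i) / real (r - i))"
  using assms
proof (induction t)
  case 0
  thus ?case by simp
next
  case (Suc t)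
  have IH: "real (n choose r) = real ((n - t) choose (r - t)) * (\<Prod>i<t. real (n - i) / real (r - i))"
    using Suc by simp
  define n' where "n' = n - t - 1"
  define r' where "r' = r - t - 1"
  have n': "n - t = Suc n'" using Suc.prems unfolding n'_def by simp
  have r': "r - t = Suc r'" using Suc.prems unfolding r'_def by simp
  have nn: "n - Suc t = n'" and rr: "r - Suc t = r'" unfolding n'_def r'_def by simp_all
  have e: "Suc n' * (n' choose r') = (Suc n' choose Suc r') * Suc r'" by (rule Suc_times_binomial_eq)
  have "real (Suc n') * real (n' choose r') = real (Suc n' choose Suc r') * real (Suc r')"
    using arg_cong[OF e, of real] by (simp only: of_nat_mult)
  hence "real (Suc n' choose Suc r') = real (n' choose r') * (real (Suc n') / real (Suc r'))"
    by (simp add: field_simps del: of_nat_Suc)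
  hence H: "real ((n - t) choose (r - t)) = real ((n - Suc t) choose (r - Suc t)) * (real (n - t) / real (r - t))"
    unfolding n' r' nn rr .
  have "real (n choose r) = real ((n - Suc t) choose (r - Suc t)) * ((\<Prod>i<t. real (n - i) / real (r - i)) * (real (n - t) / real (r - t)))"
    unfolding IH H by (simp only: ac_simps)
  thus ?case by (simp only: prod.lessThan_Suc)
qed

lemma binom_shift_bound:
  assumes "r0 \<le> n0"
  shows "real ((n0 + c) choose (r0 + c)) \<le> real (n0 choose r0) * ((real n0 + 1) / (real r0 + 1)) ^ c"
proof (induction c)
  case 0
  thus ?case by simp
next
  case (Suc c)
  have e: "Suc (n0 + c) * ((n0 + c) choose (r0 + c)) = (Suc (n0 + c) choose Suc (r0 + c)) * Suc (r0 + c)"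
    by (rule Suc_times_binomial_eq)
  have e2: "real ((n0 + Suc c) choose (r0 + Suc c)) = real ((n0 + c) choose (r0 + c)) * ((real n0 + c + 1) / (real r0 + c + 1))"
  proof -
    have "real (Suc (n0 + c) * ((n0 + c) choose (r0 + c))) = real ((Suc (n0 + c) choose Suc (r0 + c)) * Suc (r0 + c))"
      using e by simp
    thus ?thesis by (simp add: field_simps)
  qed
  have le: "(real n0 + c + 1) / (real r0 + c + 1) \<le> (real n0 + 1) / (real r0 + 1)"
  proof -
    have "(real n0 + c + 1) * (real r0 + 1) \<le> (real n0 + 1) * (real r0 + c + 1)"
    proof -
      have "real c * real r0 \<le> real c * real n0" using assms by (intro mult_left_mono) auto
      thus ?thesis by (simp add: algebra_simps)
    qed
    thus ?thesis by (simp add: field_simps)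
  qed
  have "real ((n0 + Suc c) choose (r0 + Suc c)) \<le> real (n0 choose r0) * ((real n0 + 1) / (real r0 + 1)) ^ c * ((real n0 + c + 1) / (real r0 + c + 1))"
    unfolding e2 by (intro mult_right_mono Suc.IH) auto
  also have "\<dots> \<le> real (n0 choose r0) * ((real n0 + 1) / (real r0 + 1)) ^ c * ((real n0 + 1) / (real r0 + 1))"
    by (intro mult_left_mono le) auto
  finally show ?case by (simp only: power_Suc2 mult.assoc)
qed

lemma sq_mean_le:
  fixes F :: "'a \<Rightarrow> real"
  assumes "finite S" "S \<noteq> {}"
  shows "(sum F S / card S)\<^sup>2 \<le> sum (\<lambda>x. (F x)\<^sup>2) S / card S"
proof -
  define n where "n = real (card S)"
  define \<mu> where "\<mu> = sum F S / n"
  have n: "n > 0" using assms unfolding n_def by (simp add: card_gt_0_iff)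
  have "0 \<le> (\<Sum>x\<in>S. (F x - \<mu>)\<^sup>2)" by (intro sum_nonneg) simp
  also have "\<dots> = (\<Sum>x\<in>S. (F x)\<^sup>2 - 2 * \<mu> * F x + \<mu>\<^sup>2)"
    by (intro sum.cong refl) (simp add: power2_eq_square algebra_simps)
  also have "\<dots> = (\<Sum>x\<in>S. (F x)\<^sup>2) - 2 * \<mu> * sum F S + n * \<mu>\<^sup>2"
    by (simp add: sum.distrib sum_subtractf sum_distrib_left n_def)
  also have "sum F S = n * \<mu>" unfolding \<mu>_def using n by simp
  finally have "n * \<mu>\<^sup>2 \<le> (\<Sum>x\<in>S. (F x)\<^sup>2)" by (simp add: power2_eq_square algebra_simps)
  hence "\<mu>\<^sup>2 \<le> (\<Sum>x\<in>S. (F x)\<^sup>2) / n" using n by (simp add: field_simps)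
  thus ?thesis unfolding \<mu>_def n_def .
qed



definition Arcs :: "nat \<Rightarrow> nat \<Rightarrow> (nat \<times> nat \<Rightarrow> nat \<times> nat) \<Rightarrow> ((nat \<times> nat) \<times> (nat \<times> nat)) set" where
  "Arcs k l f = (\<lambda>v. (v, f v)) ` Dverts k l"

lemma card_Dverts: "card (Dverts k l) = k * l"
  unfolding Dverts_def by (simp add: card_cartesian_product)

lemma card_Darcs:
  assumes "l \<ge> 1"
  shows "card (Darcs k l) = k * k * l"
proof -
  define h where "h = (\<lambda>(u :: nat \<times> nat, i :: nat). (u, (i, (snd u + 1) mod l)))"
  have "Darcs k l = h ` (Dverts k l \<times> {..<k})"
  proof (intro set_eqI iffI)
    fix x assume "x \<in> Darcs k l"
    then obtain u v where x: "x = (u, v)" "u \<in> Dverts k l" "v \<in> Dverts k l" "snd v = (snd u + 1) mod l"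
      unfolding Darcs_def by auto
    have "fst v < k" using x(3) by (auto simp: Dverts_def)
    moreover have "x = h (u, fst v)" using x unfolding h_def by (simp add: prod_eq_iff)
    ultimately show "x \<in> h ` (Dverts k l \<times> {..<k})" using x(2) by blast
  next
    fix x assume "x \<in> h ` (Dverts k l \<times> {..<k})"
    then obtain u i where x: "x = h (u, i)" "u \<in> Dverts k l" "i < k" by auto
    have "(snd u + 1) mod l < l" using assms by simp
    thus "x \<in> Darcs k l" using x unfolding h_def Darcs_def by (auto simp: Dverts_def)
  qed
  moreover have "inj_on h (Dverts k l \<times> {..<k})" unfolding h_def inj_on_def by auto
  ultimately have "card (Darcs k l) = card (Dverts k l \<times> {..<k})" by (simp add: card_image)
  also have "\<dots> = k * k * l" by (simp add: card_cartesian_product card_Dverts)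
  finally show ?thesis .
qed

lemma finite_Darcs: "finite (Darcs k l)"
proof -
  have "Darcs k l \<subseteq> Dverts k l \<times> Dverts k l" unfolding Darcs_def by auto
  thus ?thesis using finite_Dverts finite_subset by (metis finite_cartesian_product)
qed

lemma Arcs_sub: "f \<in> Der k l \<Longrightarrow> Arcs k l f \<subseteq> Darcs k l"
  unfolding Arcs_def using Der_iff by blast

lemma card_Arcs: "card (Arcs k l f) = k * l"
  unfolding Arcs_def by (subst card_image) (auto simp: inj_on_def card_Dverts)

lemma Arcs_Int: "Arcs k l f \<inter> Arcs k l g = (\<lambda>v. (v, f v)) ` {v\<in>Dverts k l. f v = g v}"
  unfolding Arcs_def by auto

lemma card_Arcs_Int: "card (Arcs k l f \<inter> Arcs k l g) = card {v\<in>Dverts k l. f v = g v}"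
  unfolding Arcs_Int by (subst card_image) (auto simp: inj_on_def)

lemma card_Arcs_Un:
  "card (Arcs k l f \<union> Arcs k l g) = 2 * (k * l) - card {v\<in>Dverts k l. f v = g v}"
proof -
  have fin: "finite (Arcs k l f)" "finite (Arcs k l g)" unfolding Arcs_def using finite_Dverts by auto
  have "card (Arcs k l f \<union> Arcs k l g) + card (Arcs k l f \<inter> Arcs k l g) = card (Arcs k l f) + card (Arcs k l g)"
    using card_Un_Int[OF fin] by simp
  thus ?thesis unfolding card_Arcs card_Arcs_Int by simp
qed

lemma agree_le: "card {v\<in>Dverts k l. f v = g v} \<le> k * l"
  using card_mono[OF finite_Dverts, of "{v\<in>Dverts k l. f v = g v}"] card_Dverts by auto

lemma num_der_sum:
  assumes l: "l \<ge> 2" and E: "E \<subseteq> Darcs k l"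
  shows "num_der k l E = (\<Sum>f\<in>Der k l. if Arcs k l f \<subseteq> E then 1 else 0)"
proof -
  have "digraph_derangements (Dverts k l) E = {f\<in>Der k l. Arcs k l f \<subseteq> E}"
    using Der_sub_iff[OF E] unfolding Arcs_def by blast
  hence "num_der k l E = real (card {f\<in>Der k l. Arcs k l f \<subseteq> E})" unfolding num_der_def by simp
  also have "\<dots> = (\<Sum>f\<in>Der k l. if Arcs k l f \<subseteq> E then 1 else 0)"
    using sum.inter_filter[OF finite_Der[OF l, of k], of "\<lambda>_. 1::real" "\<lambda>f. Arcs k l f \<subseteq> E"] by simp
  finally show ?thesis .
qed



lemma Dsub_card:
  assumes "l \<ge> 1"
  shows "card (Dsubgraphs k l m) = (k * k * l) choose m"
  unfolding Dsubgraphs_def using n_subsets[OF finite_Darcs, of k l m] card_Darcs[OF assms] by simp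

lemma Dsub_finite: "finite (Dsubgraphs k l m)"
proof -
  have "Dsubgraphs k l m \<subseteq> Pow (Darcs k l)" unfolding Dsubgraphs_def by auto
  thus ?thesis using finite_Darcs finite_subset by (metis finite_Pow_iff)
qed

lemma Dsub_nonempty:
  assumes "l \<ge> 1" "m \<le> k * k * l"
  shows "Dsubgraphs k l m \<noteq> {}"
  using Dsub_card[OF assms(1), of k m] assms(2) by (metis card.empty zero_less_binomial less_numeral_extra(3))

lemma expect_eq:
  assumes "l \<ge> 1" "m \<le> k * k * l"
  shows "measure_pmf.expectation (G_rand k l m) F = (\<Sum>E\<in>Dsubgraphs k l m. F E) / real ((k * k * l) choose m)"
  unfolding G_rand_def integral_pmf_of_set[OF Dsub_nonempty[OF assms] Dsub_finite] Dsub_card[OF assms(1)] ..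

lemma count_sub:
  assumes "S \<subseteq> Darcs k l" "card S \<le> m" "l \<ge> 1"
  shows "(\<Sum>E\<in>Dsubgraphs k l m. if S \<subseteq> E then 1 else 0) = real ((k * k * l - card S) choose (m - card S))"
proof -
  have "(\<Sum>E\<in>Dsubgraphs k l m. if S \<subseteq> E then 1 else (0::real)) = real (card {E\<in>Dsubgraphs k l m. S \<subseteq> E})"
    using sum.inter_filter[OF Dsub_finite[of k l m], of "\<lambda>_. 1::real" "\<lambda>E. S \<subseteq> E"] by simp
  also have "{E\<in>Dsubgraphs k l m. S \<subseteq> E} = {E. E \<subseteq> Darcs k l \<and> card E = m \<and> S \<subseteq> E}"
    unfolding Dsubgraphs_def by auto
  also have "card \<dots> = (card (Darcs k l) - card S) choose (m - card S)"
    by (rule count_supersets[OF finite_Darcs assms(1,2)])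
  finally show ?thesis using card_Darcs[OF assms(3)] by simp
qed

lemma sum_E1:
  assumes l: "l \<ge> 2" and m: "k * l \<le> m"
  shows "(\<Sum>E\<in>Dsubgraphs k l m. num_der k l E) = real (card (Der k l)) * real ((k * k * l - k * l) choose (m - k * l))"
proof -
  have "(\<Sum>E\<in>Dsubgraphs k l m. num_der k l E) = (\<Sum>E\<in>Dsubgraphs k l m. \<Sum>f\<in>Der k l. if Arcs k l f \<subseteq> E then 1 else 0)"
    by (intro sum.cong refl num_der_sum[OF l]) (auto simp: Dsubgraphs_def)
  also have "\<dots> = (\<Sum>f\<in>Der k l. \<Sum>E\<in>Dsubgraphs k l m. if Arcs k l f \<subseteq> E then 1 else 0)"
    by (rule sum.swap)
  also have "\<dots> = (\<Sum>f\<in>Der k l. real ((k * k * l - k * l) choose (m - k * l)))"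
  proof (intro sum.cong refl)
    fix f assume f: "f \<in> Der k l"
    show "(\<Sum>E\<in>Dsubgraphs k l m. if Arcs k l f \<subseteq> E then 1 else 0) = real ((k * k * l - k * l) choose (m - k * l))"
      using count_sub[OF Arcs_sub[OF f], of m] card_Arcs[of k l f] m l by simp
  qed
  also have "\<dots> = real (card (Der k l)) * real ((k * k * l - k * l) choose (m - k * l))" by simp
  finally show ?thesis .
qed

lemma sum_E2:
  assumes l: "l \<ge> 2" and m: "2 * (k * l) \<le> m" and mN: "m \<le> k * k * l"
  shows "(\<Sum>E\<in>Dsubgraphs k l m. (num_der k l E)\<^sup>2) =
    (\<Sum>f\<in>Der k l. \<Sum>g\<in>Der k l. real ((k * k * l - 2 * (k * l) + card {v\<in>Dverts k l. f v = g v})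
         choose (m - 2 * (k * l) + card {v\<in>Dverts k l. f v = g v})))"
proof -
  have sq: "(num_der k l E)\<^sup>2 = (\<Sum>f\<in>Der k l. \<Sum>g\<in>Der k l. if Arcs k l f \<union> Arcs k l g \<subseteq> E then 1 else 0)"
    if E: "E \<in> Dsubgraphs k l m" for E
  proof -
    have ES: "E \<subseteq> Darcs k l" using E by (simp add: Dsubgraphs_def)
    have "(num_der k l E)\<^sup>2 = (\<Sum>f\<in>Der k l. if Arcs k l f \<subseteq> E then 1 else 0) * (\<Sum>g\<in>Der k l. if Arcs k l g \<subseteq> E then 1 else (0::real))"
      unfolding num_der_sum[OF l ES] power2_eq_square ..
    also have "\<dots> = (\<Sum>f\<in>Der k l. \<Sum>g\<in>Der k l. (if Arcs k l f \<subseteq> E then 1 else 0) * (if Arcs k l g \<subseteq> E then 1 else (0::real)))"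
      by (rule sum_product)
    also have "\<dots> = (\<Sum>f\<in>Der k l. \<Sum>g\<in>Der k l. if Arcs k l f \<union> Arcs k l g \<subseteq> E then 1 else 0)"
      by (intro sum.cong refl) auto
    finally show ?thesis .
  qed
  have "(\<Sum>E\<in>Dsubgraphs k l m. (num_der k l E)\<^sup>2)
      = (\<Sum>E\<in>Dsubgraphs k l m. \<Sum>f\<in>Der k l. \<Sum>g\<in>Der k l. if Arcs k l f \<union> Arcs k l g \<subseteq> E then 1 else 0)"
    by (intro sum.cong refl sq)
  also have "\<dots> = (\<Sum>f\<in>Der k l. \<Sum>E\<in>Dsubgraphs k l m. \<Sum>g\<in>Der k l. if Arcs k l f \<union> Arcs k l g \<subseteq> E then 1 else 0)"
    by (rule sum.swap)
  also have "\<dots> = (\<Sum>f\<in>Der k l. \<Sum>g\<in>Der k l. \<Sum>E\<in>Dsubgraphs k l m. if Arcs k l f \<union> Arcs k l g \<subseteq> E then 1 else 0)"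
    by (intro sum.cong refl sum.swap)
  also have "\<dots> = (\<Sum>f\<in>Der k l. \<Sum>g\<in>Der k l. real ((k * k * l - 2 * (k * l) + card {v\<in>Dverts k l. f v = g v})
         choose (m - 2 * (k * l) + card {v\<in>Dverts k l. f v = g v})))"
  proof (intro sum.cong refl)
    fix f g assume f: "f \<in> Der k l" and g: "g \<in> Der k l"
    define c where "c = card {v\<in>Dverts k l. f v = g v}"
    have c: "c \<le> k * l" unfolding c_def by (rule agree_le)
    have cU: "card (Arcs k l f \<union> Arcs k l g) = 2 * (k * l) - c" unfolding c_def by (rule card_Arcs_Un)
    have sub: "Arcs k l f \<union> Arcs k l g \<subseteq> Darcs k l" using Arcs_sub[OF f] Arcs_sub[OF g] by auto
    have "(\<Sum>E\<in>Dsubgraphs k l m. if Arcs k l f \<union> Arcs k l g \<subseteq> E then 1 else 0)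
        = real ((k * k * l - (2 * (k * l) - c)) choose (m - (2 * (k * l) - c)))"
      using count_sub[OF sub, of m] cU m l by simp
    also have "k * k * l - (2 * (k * l) - c) = k * k * l - 2 * (k * l) + c" using c m mN by simp
    also have "m - (2 * (k * l) - c) = m - 2 * (k * l) + c" using c m by simp
    finally show "(\<Sum>E\<in>Dsubgraphs k l m. if Arcs k l f \<union> Arcs k l g \<subseteq> E then 1 else 0)
        = real ((k * k * l - 2 * (k * l) + card {v\<in>Dverts k l. f v = g v})
         choose (m - 2 * (k * l) + card {v\<in>Dverts k l. f v = g v}))" unfolding c_def .
  qed
  finally show ?thesis .
qed



lemma factor_le:
  fixes N m a i :: real
  assumes "0 \<le> i" "i < a" "2 * a \<le> m" "m \<le> N" "2 * a < N"
  shows "((N - i) / (m - i)) / ((N - a - i) / (m - a - i)) \<le> ((m - a) * (N - a)) / (m * (N - 2 * a))"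
proof -
  have p1: "m - i > 0" "m - a - i > 0" "N - a - i > 0" "m > 0" "N - 2 * a > 0" using assms by linarith+
  have i1: "(m - a - i) * m \<le> (m - a) * (m - i)"
  proof -
    have "0 \<le> a * i" using assms by simp
    thus ?thesis by (simp add: algebra_simps)
  qed
  have i2: "(N - i) * (N - 2 * a) \<le> (N - a) * (N - a - i)"
  proof -
    have "a * i \<le> a * a" using assms by (intro mult_left_mono) auto
    thus ?thesis by (simp add: algebra_simps)
  qed
  have "((N - i) / (m - i)) / ((N - a - i) / (m - a - i)) = ((m - a - i) / (m - i)) * ((N - i) / (N - a - i))"
    using p1 by (simp add: field_simps)
  also have "\<dots> \<le> ((m - a) / m) * ((N - a) / (N - 2 * a))"
  proof (rule mult_mono)
    show "(m - a - i) / (m - i) \<le> (m - a) / m" using p1 i1 by (simp add: divide_simps)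
    show "(N - i) / (N - a - i) \<le> (N - a) / (N - 2 * a)" using p1 i2 by (simp add: divide_simps)
    show "0 \<le> (m - a) / m" using p1 assms by simp
    show "0 \<le> (N - i) / (N - a - i)" using p1 assms by simp
  qed
  also have "\<dots> = ((m - a) * (N - a)) / (m * (N - 2 * a))" by simp
  finally show ?thesis .
qed

lemma h0_bound:
  fixes N m a :: nat
  assumes m: "2 * a \<le> m" "m \<le> N" and N: "2 * a < N"
  shows "real ((N - 2 * a) choose (m - 2 * a)) * real (N choose m) / (real ((N - a) choose (m - a)))\<^sup>2
         \<le> (((real m - real a) * (real N - real a)) / (real m * (real N - 2 * real a))) ^ a"
proof -
  define P1 where "P1 = (\<Prod>i<a. real (N - i) / real (m - i))"
  define P2 where "P2 = (\<Prod>i<a. real (N - a - i) / real (m - a - i))"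
  have e1: "real (N choose m) = real ((N - a) choose (m - a)) * P1"
    unfolding P1_def using m by (intro binom_ratio) auto
  have e2: "real ((N - a) choose (m - a)) = real ((N - 2 * a) choose (m - 2 * a)) * P2"
  proof -
    have "real ((N - a) choose (m - a)) = real ((N - a - a) choose (m - a - a)) * P2"
      unfolding P2_def using m by (intro binom_ratio) auto
    moreover have "N - a - a = N - 2 * a" "m - a - a = m - 2 * a" by auto
    ultimately show ?thesis by simp
  qed
  have B1: "real ((N - a) choose (m - a)) > 0" using m by simp
  have B0: "real ((N - 2 * a) choose (m - 2 * a)) > 0" using m by simp
  have P2pos: "P2 > 0" using B1 B0 e2 by (metis zero_less_mult_pos)
  have "real ((N - 2 * a) choose (m - 2 * a)) * real (N choose m) / (real ((N - a) choose (m - a)))\<^sup>2 = P1 / P2"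
  proof -
    have "real ((N - 2 * a) choose (m - 2 * a)) * real (N choose m) / (real ((N - a) choose (m - a)))\<^sup>2
        = real ((N - 2 * a) choose (m - 2 * a)) * P1 / real ((N - a) choose (m - a))"
      using B1 unfolding e1 by (simp add: power2_eq_square field_simps)
    also have "\<dots> = P1 / P2" unfolding e2 using B0 P2pos by (simp add: field_simps)
    finally show ?thesis .
  qed
  also have "\<dots> = (\<Prod>i<a. (real (N - i) / real (m - i)) / (real (N - a - i) / real (m - a - i)))"
    unfolding P1_def P2_def by (rule prod_dividef[symmetric])
  also have "\<dots> \<le> (\<Prod>i<a. ((real m - real a) * (real N - real a)) / (real m * (real N - 2 * real a)))"
  proof (rule prod_mono, rule conjI)
    fix i assume i: "i \<in> {..<a}"
    have c: "real (N - i) = real N - real i" "real (m - i) = real m - real i"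
      "real (N - a - i) = real N - real a - real i" "real (m - a - i) = real m - real a - real i"
      using i m N by (auto simp: of_nat_diff)
    show "0 \<le> (real (N - i) / real (m - i)) / (real (N - a - i) / real (m - a - i))" by simp
    show "(real (N - i) / real (m - i)) / (real (N - a - i) / real (m - a - i))
        \<le> ((real m - real a) * (real N - real a)) / (real m * (real N - 2 * real a))"
      unfolding c using i m N by (intro factor_le) auto
  qed
  also have "\<dots> = (((real m - real a) * (real N - real a)) / (real m * (real N - 2 * real a))) ^ a" by simp
  finally show ?thesis .
qed



lemma ratio_bound:
  fixes k l m :: nat
  defines "a \<equiv> k * l" and "N \<equiv> k * k * l"
  assumes l: "l \<ge> 2" and m: "2 * a \<le> m" "m \<le> N" and N: "2 * a < N"
  defines "E1 \<equiv> measure_pmf.expectation (G_rand k l m) (\<lambda>E. num_der k l E)"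
      and "E2 \<equiv> measure_pmf.expectation (G_rand k l m) (\<lambda>E. (num_der k l E)\<^sup>2)"
  shows "E1 > 0" "E1\<^sup>2 \<le> E2"
    "E2 \<le> E1\<^sup>2 * ((((real m - real a) * (real N - real a)) / (real m * (real N - 2 * real a))) ^ a
          * exp (real l * ((real (N - 2 * a) + 1) / (real (m - 2 * a) + 1) - 1)))"
proof -
  have l1: "l \<ge> 1" using l by simp
  define D where "D = real (card (Der k l))"
  define C0 where "C0 = real (N choose m)"
  define B1 where "B1 = real ((N - a) choose (m - a))"
  define X where "X = real ((N - 2 * a) choose (m - 2 * a))"
  define \<rho> where "\<rho> = (real (N - 2 * a) + 1) / (real (m - 2 * a) + 1)"
  have mN': "m \<le> k * k * l" using m unfolding N_def by simp
  have m2: "2 * (k * l) \<le> m" using m unfolding a_def by simp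
  have Dpos: "D > 0" unfolding D_def card_Der[OF l] by simp
  have C0pos: "C0 > 0" unfolding C0_def using m by simp
  have B1pos: "B1 > 0" unfolding B1_def using m by simp
  have Xpos: "X > 0" unfolding X_def using m by simp
  have rho1: "\<rho> \<ge> 1" unfolding \<rho>_def using m by (simp add: field_simps)
  have E1eq: "E1 = D * B1 / C0"
  proof -
    have ma: "k * l \<le> m" using m unfolding a_def by simp
    show ?thesis
      unfolding E1_def expect_eq[OF l1 mN'] sum_E1[OF l ma] D_def B1_def C0_def a_def N_def by simp
  qed
  show "E1 > 0" using Dpos B1pos C0pos E1eq by simp
  have E2eq: "E2 = (\<Sum>f\<in>Der k l. \<Sum>g\<in>Der k l. real ((N - 2 * a + card {v\<in>Dverts k l. f v = g v})
         choose (m - 2 * a + card {v\<in>Dverts k l. f v = g v}))) / C0"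
    unfolding E2_def expect_eq[OF l1 mN'] C0_def N_def a_def
    using sum_E2[OF l m2 mN'] unfolding a_def N_def by simp
  show "E1\<^sup>2 \<le> E2"
  proof -
    have "E1 = (\<Sum>E\<in>Dsubgraphs k l m. num_der k l E) / real (card (Dsubgraphs k l m))"
      unfolding E1_def expect_eq[OF l1 mN'] Dsub_card[OF l1] ..
    moreover have "E2 = (\<Sum>E\<in>Dsubgraphs k l m. (num_der k l E)\<^sup>2) / real (card (Dsubgraphs k l m))"
      unfolding E2_def expect_eq[OF l1 mN'] Dsub_card[OF l1] ..
    ultimately show ?thesis using sq_mean_le[OF Dsub_finite Dsub_nonempty[OF l1 mN']] by simp
  qed
  have "(\<Sum>f\<in>Der k l. \<Sum>g\<in>Der k l. real ((N - 2 * a + card {v\<in>Dverts k l. f v = g v})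
         choose (m - 2 * a + card {v\<in>Dverts k l. f v = g v})))
      \<le> (\<Sum>f\<in>Der k l. \<Sum>g\<in>Der k l. X * \<rho> ^ card {v\<in>Dverts k l. f v = g v})"
  proof (intro sum_mono)
    fix f g
    have "real ((N - 2 * a + card {v\<in>Dverts k l. f v = g v}) choose (m - 2 * a + card {v\<in>Dverts k l. f v = g v}))
        \<le> X * ((real (N - 2 * a) + 1) / (real (m - 2 * a) + 1)) ^ card {v\<in>Dverts k l. f v = g v}"
      unfolding X_def using m by (intro binom_shift_bound) simp
    thus "real ((N - 2 * a + card {v\<in>Dverts k l. f v = g v}) choose (m - 2 * a + card {v\<in>Dverts k l. f v = g v}))
        \<le> X * \<rho> ^ card {v\<in>Dverts k l. f v = g v}" unfolding \<rho>_def .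
  qed
  also have "\<dots> = X * (\<Sum>f\<in>Der k l. \<Sum>g\<in>Der k l. \<rho> ^ card {v\<in>Dverts k l. f v = g v})"
    by (simp add: sum_distrib_left)
  also have "\<dots> \<le> X * (D\<^sup>2 * exp (real l * (\<rho> - 1)))"
    unfolding D_def using Xpos by (intro mult_left_mono key_bound[OF l rho1]) auto
  finally have S2: "E2 \<le> X * (D\<^sup>2 * exp (real l * (\<rho> - 1))) / C0"
    unfolding E2eq using C0pos by (simp add: divide_right_mono)
  have "X * (D\<^sup>2 * exp (real l * (\<rho> - 1))) / C0 = E1\<^sup>2 * (X * C0 / B1\<^sup>2) * exp (real l * (\<rho> - 1))"
    unfolding E1eq using C0pos B1pos by (simp add: field_simps power2_eq_square)
  also have "\<dots> \<le> E1\<^sup>2 * ((((real m - real a) * (real N - real a)) / (real m * (real N - 2 * real a))) ^ a)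
      * exp (real l * (\<rho> - 1))"
  proof (intro mult_right_mono mult_left_mono)
    show "X * C0 / B1\<^sup>2 \<le> (((real m - real a) * (real N - real a)) / (real m * (real N - 2 * real a))) ^ a"
      unfolding X_def C0_def B1_def using h0_bound[OF m N] by simp
  qed auto
  finally show "E2 \<le> E1\<^sup>2 * ((((real m - real a) * (real N - real a)) / (real m * (real N - 2 * real a))) ^ a
          * exp (real l * ((real (N - 2 * a) + 1) / (real (m - 2 * a) + 1) - 1)))"
    using S2 unfolding \<rho>_def by (simp add: mult.assoc)
qed



lemma lim_B:
  fixes p :: real assumes "p > 0" "p < 1"
  shows "(\<lambda>k::nat. ((1 - 1/(p*real k)) * ((real k-1)/(real k-2))) ^ k) \<longlonglongrightarrow> exp (1 - inverse p)"
  using assms by real_asymp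
lemma lim_R:
  fixes p L :: real assumes "p > 0" "p < 1" "L \<ge> 2"
  shows "(\<lambda>k::nat. ((real k)^2*L - 2*real k*L+1)/(p*(real k)^2*L - 2*real k*L)) \<longlonglongrightarrow> L * (inverse p * inverse L)"
  using assms by real_asymp

lemma m_of_bounds:
  assumes "0 < p"
  shows "real (m_of p k l) \<le> p * (real k)\<^sup>2 * real l" "real (m_of p k l) > p * (real k)\<^sup>2 * real l - 1"
proof -
  have x0: "p * real (k\<^sup>2 * l) \<ge> 0" using assms by simp
  have e: "real (m_of p k l) = real_of_int \<lfloor>p * real (k\<^sup>2 * l)\<rfloor>"
    unfolding m_of_def using x0 by simp
  show "real (m_of p k l) \<le> p * (real k)\<^sup>2 * real l" unfolding e by (simp add: mult.assoc)
  show "real (m_of p k l) > p * (real k)\<^sup>2 * real l - 1" unfolding e by (simp add: mult.assoc)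
qed

definition Wk :: "real \<Rightarrow> nat \<Rightarrow> nat \<Rightarrow> real" where
  "Wk p l k = (((1 - 1/(p*real k)) * ((real k-1)/(real k-2))) ^ k) ^ l *
     exp (real l * (((real k)^2*real l - 2*real k*real l+1)/(p*(real k)^2*real l - 2*real k*real l) - 1))"

lemma Wk_lim:
  assumes "0 < p" "p < 1" "l \<ge> 2"
  shows "Wk p l \<longlonglongrightarrow> 1"
proof -
  have L: "real l \<ge> 2" using assms by simp
  have "Wk p l \<longlonglongrightarrow> (exp (1 - inverse p)) ^ l * exp (real l * (real l * (inverse p * inverse (real l)) - 1))"
    unfolding Wk_def
    by (intro tendsto_intros lim_B lim_R assms L)
  also have "(exp (1 - inverse p)) ^ l * exp (real l * (real l * (inverse p * inverse (real l)) - 1)) = 1"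
  proof -
    have A: "real l * (inverse p * inverse (real l)) = inverse p" using L by (simp add: field_simps)
    have "(exp (1 - inverse p)) ^ l * exp (real l * (real l * (inverse p * inverse (real l)) - 1))
        = exp (real l * (1 - inverse p)) * exp (real l * (inverse p - 1))"
      by (simp only: A exp_of_nat_mult[symmetric])
    also have "exp (real l * (1 - inverse p)) * exp (real l * (inverse p - 1)) = 1"
      by (simp flip: exp_add add: algebra_simps)
    finally show ?thesis .
  qed
  finally show ?thesis .
qed

lemma eventual_bounds:
  fixes p :: real and l k :: nat
  assumes p: "0 < p" "p < 1" and l: "l \<ge> 2" and k3: "k \<ge> 3" and kp: "real k \<ge> 3 / p"
  defines "m \<equiv> m_of p k l"
  defines "E1 \<equiv> measure_pmf.expectation (G_rand k l m) (\<lambda>E. num_der k l E)"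
      and "E2 \<equiv> measure_pmf.expectation (G_rand k l m) (\<lambda>E. (num_der k l E)\<^sup>2)"
  shows "E1 > 0" "E1\<^sup>2 \<le> E2" "E2 \<le> E1\<^sup>2 * Wk p l k"
proof -
  define K where "K = real k"
  define L where "L = real l"
  define M where "M = real m"
  have K3: "K \<ge> 3" using k3 unfolding K_def by simp
  have L2: "L \<ge> 2" using l unfolding L_def by simp
  have pK: "p * K \<ge> 3" using kp p unfolding K_def by (simp add: field_simps)
  have Mle: "M \<le> p * K\<^sup>2 * L" unfolding M_def m_def K_def L_def by (rule m_of_bounds(1)[OF p(1)])
  have Mgt: "M > p * K\<^sup>2 * L - 1" unfolding M_def m_def K_def L_def by (rule m_of_bounds(2)[OF p(1)])
  have KL: "K * L \<ge> 1"
  proof -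
    have "1 * 1 \<le> K * L" using K3 L2 by (intro mult_mono) auto
    thus ?thesis by simp
  qed
  have big: "p * K\<^sup>2 * L \<ge> 3 * (K * L)"
  proof -
    have "p * K\<^sup>2 * L = (p * K) * (K * L)" by (simp add: power2_eq_square)
    also have "\<dots> \<ge> 3 * (K * L)" using pK KL by (intro mult_right_mono) auto
    finally show ?thesis .
  qed
  have c1: "2 * (k * l) \<le> m"
  proof -
    have "2 * (K * L) < M" using big Mgt KL by linarith
    hence "real (2 * (k * l)) < real m" unfolding K_def L_def M_def by simp
    thus ?thesis by linarith
  qed
  have c2: "m \<le> k * k * l"
  proof -
    have "p * K\<^sup>2 * L \<le> 1 * K\<^sup>2 * L" using p L2 by (intro mult_right_mono) auto
    hence "M \<le> K * K * L" using Mle by (simp add: power2_eq_square)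
    hence "real m \<le> real (k * k * l)" unfolding K_def L_def M_def by simp
    thus ?thesis by linarith
  qed
  have c3: "2 * (k * l) < k * k * l"
  proof -
    have "2 * (k * l) < 3 * (k * l)" using k3 l by simp
    also have "\<dots> \<le> k * (k * l)" using k3 by (intro mult_right_mono) auto
    finally show ?thesis by (simp add: mult.assoc)
  qed
  note R = ratio_bound[OF l c1 c2 c3, folded E1_def E2_def]
  show "E1 > 0" "E1\<^sup>2 \<le> E2" using R by auto
  define q where "q = (((real m - real (k * l)) * (real (k * k * l) - real (k * l))) / (real m * (real (k * k * l) - 2 * real (k * l))))"
  define rho where "rho = (real (k * k * l - 2 * (k * l)) + 1) / (real (m - 2 * (k * l)) + 1)"
  define B where "B = (1 - 1/(p*K)) * ((K-1)/(K-2))"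
  define R' where "R' = (K^2*L - 2*K*L+1)/(p*K^2*L - 2*K*L)"
  have Wk_eq: "Wk p l k = (B ^ k) ^ l * exp (L * (R' - 1))"
    unfolding Wk_def B_def R'_def K_def L_def ..
  have MKL: "M \<ge> 2 * (K * L)"
  proof -
    have "real (2 * (k * l)) \<le> real m" using c1 by (rule of_nat_mono)
    thus ?thesis unfolding M_def K_def L_def by simp
  qed
  have Mpos: "M > 0" using MKL KL by linarith
  have q_eq: "q = ((M - K * L) / M) * ((K - 1) / (K - 2))"
  proof -
    have "q = ((M - K * L) * (K * K * L - K * L)) / (M * (K * K * L - 2 * (K * L)))"
      unfolding q_def M_def K_def L_def by simp
    also have "\<dots> = ((M - K * L) / M) * ((K * K * L - K * L) / (K * K * L - 2 * (K * L)))"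
      by (rule times_divide_times_eq[symmetric])
    also have "(K * K * L - K * L) / (K * K * L - 2 * (K * L)) = (K - 1) / (K - 2)"
      using K3 L2 by (simp add: field_simps)
    finally show ?thesis .
  qed
  have q0: "q \<ge> 0" unfolding q_eq using MKL Mpos KL K3 by (intro mult_nonneg_nonneg divide_nonneg_pos) auto
  have qB: "q \<le> B"
  proof -
    have "(M - K * L) / M \<le> 1 - 1 / (p * K)"
    proof -
      have "K * L / M \<ge> K * L / (p * K\<^sup>2 * L)" using Mle Mpos KL by (intro divide_left_mono) auto
      moreover have "K * L / (p * K\<^sup>2 * L) = 1 / (p * K)" using K3 L2 p by (simp add: field_simps power2_eq_square)
      moreover have "(M - K * L) / M = 1 - K * L / M" using Mpos by (simp add: field_simps)
      ultimately show ?thesis by linarith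
    qed
    moreover have "(K - 1) / (K - 2) \<ge> 0" using K3 by simp
    ultimately show ?thesis unfolding q_eq B_def by (intro mult_right_mono) auto
  qed
  have qa: "q ^ (k * l) \<le> (B ^ k) ^ l" unfolding power_mult[symmetric] using q0 qB by (intro power_mono) auto
  have rhoR: "rho \<le> R'"
  proof -
    have e1: "real (k * k * l - 2 * (k * l)) = K^2 * L - 2 * K * L"
      using c3 unfolding K_def L_def by (simp add: of_nat_diff power2_eq_square)
    have e2: "real (m - 2 * (k * l)) = M - 2 * K * L"
      using c1 unfolding K_def L_def M_def by (simp add: of_nat_diff)
    have d: "0 < p * K^2 * L - 2 * K * L" using big KL by linarith
    have dd: "p * K^2 * L - 2 * K * L \<le> M - 2 * K * L + 1" using Mgt by linarith
    have n: "0 \<le> K^2 * L - 2 * K * L + 1" using c3 e1 by (metis add_nonneg_nonneg of_nat_0_le_iff zero_le_one)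
    show ?thesis unfolding rho_def R'_def e1 e2 using d dd n by (intro divide_left_mono) auto
  qed
  have "E2 \<le> E1\<^sup>2 * (q ^ (k * l) * exp (real l * (rho - 1)))"
    using R(3) unfolding q_def rho_def by simp
  also have "\<dots> \<le> E1\<^sup>2 * ((B ^ k) ^ l * exp (L * (R' - 1)))"
  proof (intro mult_left_mono mult_mono qa)
    show "exp (real l * (rho - 1)) \<le> exp (L * (R' - 1))" unfolding L_def using rhoR by (intro exp_mono mult_left_mono) auto
    have "B \<ge> 0" using q0 qB by linarith
    thus "0 \<le> (B ^ k) ^ l" by simp
  qed auto
  finally show "E2 \<le> E1\<^sup>2 * Wk p l k" unfolding Wk_eq .
qed



theorem mainTheorem7:
  fixes l :: nat and p :: real
  assumes "l \<ge> 2" and "0 < p" and "p < 1"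
  shows "(\<lambda>k. measure_pmf.expectation (G_rand k l (m_of p k l)) (\<lambda>E. (num_der k l E)^2))
         \<sim>[sequentially]
         (\<lambda>k. (measure_pmf.expectation (G_rand k l (m_of p k l)) (\<lambda>E. num_der k l E))^2)"
proof (rule asymp_equivI')
  define E1 where "E1 k = measure_pmf.expectation (G_rand k l (m_of p k l)) (\<lambda>E. num_der k l E)" for k
  define E2 where "E2 k = measure_pmf.expectation (G_rand k l (m_of p k l)) (\<lambda>E. (num_der k l E)^2)" for k
  define K0 where "K0 = max 3 (nat \<lceil>3 / p\<rceil>)"
  have ev: "\<forall>\<^sub>F k in sequentially. 1 \<le> E2 k / (E1 k)\<^sup>2 \<and> E2 k / (E1 k)\<^sup>2 \<le> Wk p l k"
    unfolding eventually_sequentially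
  proof (intro exI allI impI)
    fix k assume k: "K0 \<le> k"
    have k3: "k \<ge> 3" using k unfolding K0_def by simp
    have "real k \<ge> real (nat \<lceil>3 / p\<rceil>)" using k unfolding K0_def by simp
    moreover have "real (nat \<lceil>3 / p\<rceil>) \<ge> 3 / p" by linarith
    ultimately have kp: "real k \<ge> 3 / p" by linarith
    note B = eventual_bounds[OF assms(2,3,1) k3 kp, folded E1_def E2_def]
    have pos: "(E1 k)\<^sup>2 > 0" using B(1) by simp
    show "1 \<le> E2 k / (E1 k)\<^sup>2 \<and> E2 k / (E1 k)\<^sup>2 \<le> Wk p l k"
      using B(2,3) pos by (simp add: pos_divide_le_eq pos_le_divide_eq mult.commute)
  qed
  have "(\<lambda>k. E2 k / (E1 k)\<^sup>2) \<longlonglongrightarrow> 1"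
  proof (rule tendsto_sandwich[of "\<lambda>_. 1" _ _ "Wk p l"])
    show "\<forall>\<^sub>F k in sequentially. 1 \<le> E2 k / (E1 k)\<^sup>2" using ev by (rule eventually_mono) auto
    show "\<forall>\<^sub>F k in sequentially. E2 k / (E1 k)\<^sup>2 \<le> Wk p l k" using ev by (rule eventually_mono) auto
    show "(\<lambda>_. 1::real) \<longlonglongrightarrow> 1" by simp
    show "Wk p l \<longlonglongrightarrow> 1" by (rule Wk_lim[OF assms(2,3,1)])
  qed
  thus "(\<lambda>k. measure_pmf.expectation (G_rand k l (m_of p k l)) (\<lambda>E. (num_der k l E)^2) /
          (measure_pmf.expectation (G_rand k l (m_of p k l)) (\<lambda>E. num_der k l E))^2) \<longlonglongrightarrow> 1"
    unfolding E1_def E2_def .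
qed


end
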